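(* Let $X$ be a real Banach space with dual $X^*$, let $A\colon X\rightrightarrows X^*$ be a set-valued operator, let $C$ be a nonempty closed convex subset of $X$, and let $(z,z^* )\in X\times X^*$. Define $I_C\colon X\rightrightarrows X^*$ by $I_C(x)=\{0\}$ if $x\in C$ and $I_C(x)=\varnothing$ otherwise, and for $a\in C$ let $T_C(a)=\{x\in X:\sup\langle x,N_C(a)\rangle\le 0\}$. Then $(z,z^* )$ is monotonically related to $\operatorname{gra}(A+N_C)$ if and only if $(z,z^* )$ is monotonically related to $\operatorname{gra}(A+I_C)$ and $z\in\bigcap_{a\in\operatorname{dom}A\cap C}\big(a+T_C(a)\big)$.
   Context: $\langle\cdot,\cdot\rangle$ is the pairing between $X$ and $X^*$. For $B\colon X\rightrightarrows X^*$, $\operatorname{gra}B=\{(x,x^* ): x^*\in Bx\}$, $\operatorname{dom}B=\{x: Bx\neq\varnothing\}$, and sums are $(B_1+B_2)x=\{b_1^*+b_2^*: b_1^*\in B_1x,\ b_2^*\in B_2x\}$. A point $(z,z^* )$ is monotonically related to a set $G\subseteq X\times X^*$ if $\langle x-z,x^*-z^*\rangle\ge 0$ for all $(x,x^* )\in G$. The normal cone operator is $N_C(x)=\{x^*\in X^*:\sup_{c\in C}\langle c-x,x^*\rangle\le 0\}$ for $x\in C$ and $N_C(x)=\varnothing$ for $x\notin C$. *)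

theory Defs
  imports "HOL-Analysis.Analysis"
begin

text \<open>The dual space X* is modelled as the type of bounded linear functionals (blinfun);
  the pairing is blinfun_apply.\<close>

definition pairing :: "'a::real_normed_vector \<Rightarrow> ('a \<Rightarrow>\<^sub>L real) \<Rightarrow> real" where
  "pairing x xs = blinfun_apply xs x"

definition gra :: "('a \<Rightarrow> 'b set) \<Rightarrow> ('a \<times> 'b) set" where
  "gra B = {(x, xs). xs \<in> B x}"

definition dom_op :: "('a \<Rightarrow> 'b set) \<Rightarrow> 'a set" where
  "dom_op B = {x. B x \<noteq> {}}"

definition op_sum :: "('a \<Rightarrow> 'b::plus set) \<Rightarrow> ('a \<Rightarrow> 'b set) \<Rightarrow> 'a \<Rightarrow> 'b set" where
  "op_sum B1 B2 x = {b1 + b2 | b1 b2. b1 \<in> B1 x \<and> b2 \<in> B2 x}"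

definition mono_related ::
  "('a::real_normed_vector \<times> ('a \<Rightarrow>\<^sub>L real)) \<Rightarrow> ('a \<times> ('a \<Rightarrow>\<^sub>L real)) set \<Rightarrow> bool" where
  "mono_related p G = (\<forall>(x, xs) \<in> G. pairing (x - fst p) (xs - snd p) \<ge> 0)"

definition normal_cone :: "'a::real_normed_vector set \<Rightarrow> 'a \<Rightarrow> ('a \<Rightarrow>\<^sub>L real) set" where
  "normal_cone C x = (if x \<in> C then {xs. \<forall>c \<in> C. pairing (c - x) xs \<le> 0} else {})"

definition indicator_op :: "'a::real_normed_vector set \<Rightarrow> 'a \<Rightarrow> ('a \<Rightarrow>\<^sub>L real) set" where
  "indicator_op C x = (if x \<in> C then {0} else {})"

text \<open>T_C(a) = {x. sup <x, N_C(a)> \<le> 0}, written pointwise.\<close>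
definition tangent_cone :: "'a::real_normed_vector set \<Rightarrow> 'a \<Rightarrow> 'a set" where
  "tangent_cone C a = {x. \<forall>xs \<in> normal_cone C a. pairing x xs \<le> 0}"

end

theory Submission
  imports Defs
begin

theorem lemma2p6:
  fixes A :: "'a::banach \<Rightarrow> ('a \<Rightarrow>\<^sub>L real) set"
    and C :: "'a set"
    and z :: 'a and zs :: "'a \<Rightarrow>\<^sub>L real"
  assumes "C \<noteq> {}" and "closed C" and "convex C"
  shows "mono_related (z, zs) (gra (op_sum A (normal_cone C))) \<longleftrightarrow>
           (mono_related (z, zs) (gra (op_sum A (indicator_op C))) \<and>
            z \<in> (\<Inter>a \<in> dom_op A \<inter> C. (\<lambda>t. a + t) ` tangent_cone C a))"
proof
  assume H: "mono_related (z, zs) (gra (op_sum A (normal_cone C)))"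
  have H': "\<And>x as n. as \<in> A x \<Longrightarrow> n \<in> normal_cone C x \<Longrightarrow>
      blinfun_apply (as + n - zs) (x - z) \<ge> 0"
    using H unfolding mono_related_def gra_def op_sum_def pairing_def by fastforce
  have "mono_related (z, zs) (gra (op_sum A (indicator_op C)))"
    unfolding mono_related_def gra_def op_sum_def pairing_def indicator_op_def
  proof (clarsimp split: if_splits)
    fix x as assume "as \<in> A x" "x \<in> C"
    moreover have "0 \<in> normal_cone C x" using \<open>x \<in> C\<close> by (simp add: normal_cone_def pairing_def)
    ultimately show "0 \<le> blinfun_apply (as - zs) (x - z)" using H'[of as x 0] by simp
  qed
  moreover have "z \<in> (\<Inter>a \<in> dom_op A \<inter> C. (\<lambda>t. a + t) ` tangent_cone C a)"
  proof (clarsimp)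
    fix a assume "a \<in> dom_op A" "a \<in> C"
    then obtain as where as: "as \<in> A a" by (auto simp: dom_op_def)
    have "z - a \<in> tangent_cone C a"
      unfolding tangent_cone_def pairing_def
    proof clarify
      fix n assume n: "n \<in> normal_cone C a"
      show "blinfun_apply n (z - a) \<le> 0"
      proof (rule ccontr)
        assume "\<not> ?thesis"
        hence p: "blinfun_apply n (a - z) < 0"
          by (metis blinfun.diff_right minus_diff_eq neg_le_0_iff_le linorder_not_le)
        define t where "t = (\<bar>blinfun_apply (as - zs) (a - z)\<bar> + 1) / (- blinfun_apply n (a - z))"
        have tpos: "t \<ge> 0" using p unfolding t_def by (simp add: divide_nonneg_neg)
        have "t *\<^sub>R n \<in> normal_cone C a" using n tpos \<open>a \<in> C\<close>
          by (auto simp: normal_cone_def pairing_def blinfun.scaleR_left mult_nonneg_nonpos)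
        hence "blinfun_apply (as + t *\<^sub>R n - zs) (a - z) \<ge> 0" using H' as by blast
        hence "blinfun_apply (as - zs) (a - z) + t * blinfun_apply n (a - z) \<ge> 0"
          by (simp add: blinfun.add_left blinfun.diff_left blinfun.scaleR_left algebra_simps)
        moreover have "t * blinfun_apply n (a - z) = - (\<bar>blinfun_apply (as - zs) (a - z)\<bar> + 1)"
          using p unfolding t_def by simp
        ultimately show False by linarith
      qed
    qed
    thus "z \<in> (+) a ` tangent_cone C a" by (metis add_diff_cancel_left' diff_add_cancel image_eqI add.commute)
  qed
  ultimately show "mono_related (z, zs) (gra (op_sum A (indicator_op C))) \<and>
            z \<in> (\<Inter>a \<in> dom_op A \<inter> C. (\<lambda>t. a + t) ` tangent_cone C a)" by blast
next
  assume H: "mono_related (z, zs) (gra (op_sum A (indicator_op C))) \<and>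
            z \<in> (\<Inter>a \<in> dom_op A \<inter> C. (\<lambda>t. a + t) ` tangent_cone C a)"
  have H1: "\<And>x as. as \<in> A x \<Longrightarrow> x \<in> C \<Longrightarrow> blinfun_apply (as - zs) (x - z) \<ge> 0"
    using H unfolding mono_related_def gra_def op_sum_def pairing_def indicator_op_def
    by fastforce
  show "mono_related (z, zs) (gra (op_sum A (normal_cone C)))"
    unfolding mono_related_def gra_def op_sum_def pairing_def
  proof clarsimp
    fix x as n assume as: "as \<in> A x" and n: "n \<in> normal_cone C x"
    have xC: "x \<in> C" using n by (simp add: normal_cone_def split: if_splits)
    have "x \<in> dom_op A" using as by (auto simp: dom_op_def)
    with xC H obtain t where t: "t \<in> tangent_cone C x" "z = x + t" by blast
    have "blinfun_apply n t \<le> 0" using t n by (simp add: tangent_cone_def pairing_def)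
    moreover have "x - z = - t" using t by simp
    ultimately have "blinfun_apply n (x - z) \<ge> 0" by (simp add: blinfun.minus_right)
    moreover have "blinfun_apply (as - zs) (x - z) \<ge> 0" using H1 as xC by blast
    ultimately show "0 \<le> blinfun_apply (as + n - zs) (x - z)"
      by (simp add: blinfun.add_left blinfun.diff_left blinfun.scaleR_left algebra_simps)
  qed
qed

end
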